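(* The smallest eigenvalue of $P_{DC}^N=\tilde{\Pi}^N P_{DC} \tilde{\Pi}^N$ is \begin{equation*} \lambda^N_{\mathrm{min}}=\begin{cases} \frac{1}{2} -\frac{1}{2} \sqrt{(2p_{z}-1)^2+8\cdot 2^{-N}(p_{z}-p_{z}^2)} & N \text{ odd},\\ \frac{1}{2} -\frac{1}{2} \sqrt{(2p_{z}-1)^2+16\cdot 2^{-N}(p_{z}-p_{z}^2)} & N \text{ even}. \end{cases} \end{equation*}
   Context: Bob uses active basis choice with perfect-efficiency threshold detectors on a two-polarization-mode Fock space $\mathcal{H}_B$. His double-click POVM element in the $H/V$ basis is $P_{H/V} = \sum_{n_V=1}^\infty \sum_{n_H=1}^\infty |n_H,n_V\rangle\langle n_H,n_V|$, and $P_{D/A}$ is defined analogously in the diagonal/anti-diagonal basis. With $H/V$ chosen with probability $p_z$, the total double-click POVM is $P_{DC} = p_{z} P_{H/V}+ (1-p_{z}) P_{D/A}$. For $N=0,1,2,\dots$, the projector onto the total $N$-photon subspace is $\tilde{\Pi}^N = \sum_{n=0}^N |n,N-n\rangle\langle n,N-n|_{H/V}=\sum_{n=0}^N |n,N-n\rangle\langle n,N-n|_{D/A}$; $P_{DC}$ is block-diagonal with respect to these projectors. *)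

theory Defs
  imports "Jordan_Normal_Form.Matrix" "Jordan_Normal_Form.Char_Poly"
begin

text \<open>The total N-photon subspace is (N+1)-dimensional, with orthonormal H/V Fock basis
  |n, N-n>_{H/V}, n = 0..N; basis index n = number of H photons.
  All operators below are the matrices of the N-photon blocks in this basis.\<close>

text \<open>Amplitude <n, N-n|_{H/V} |k, N-k>_{D/A}, where the D/A modes are
  a_D = (a_H + a_V)/sqrt 2 and a_A = (a_H - a_V)/sqrt 2, so that
  |k,N-k>_{D/A} = (a_D^dag)^k (a_A^dag)^(N-k) / sqrt(k! (N-k)!) |vac>.\<close>
definition da_amp :: "nat \<Rightarrow> nat \<Rightarrow> nat \<Rightarrow> real" where
  "da_amp N n k =
     sqrt (fact n * fact (N - n) / (fact k * fact (N - k))) / sqrt (2 ^ N) *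
     (\<Sum>j\<in>{j. j \<le> k \<and> j \<le> n \<and> n - j \<le> N - k}.
        real (k choose j) * real ((N - k) choose (n - j)) * (- 1) ^ (N - k - (n - j)))"

definition P_HV :: "nat \<Rightarrow> real mat" where
  "P_HV N = mat (N + 1) (N + 1) (\<lambda>(i, j). if i = j \<and> 1 \<le> i \<and> 1 \<le> N - i then 1 else 0)"

text \<open>Double-click element in the D/A basis restricted to the N-photon block:
  sum over k with k \<ge> 1 and N-k \<ge> 1 of |k,N-k><k,N-k|_{D/A}.\<close>
definition P_DA :: "nat \<Rightarrow> real mat" where
  "P_DA N = mat (N + 1) (N + 1) (\<lambda>(i, j).
      \<Sum>k\<in>{k. k \<le> N \<and> 1 \<le> k \<and> 1 \<le> N - k}. da_amp N i k * da_amp N j k)"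

definition P_DC :: "nat \<Rightarrow> real \<Rightarrow> real mat" where
  "P_DC N pz = pz \<cdot>\<^sub>m P_HV N + (1 - pz) \<cdot>\<^sub>m P_DA N"

end

theory Submission imports Defs "HOL-Computational_Algebra.Polynomial" begin

lemma coeff_lin_pow: "coeff ([:a,b:]^n) k = of_nat (n choose k) * a^(n-k) * (b::'a::comm_ring_1)^k"
proof (induction n arbitrary: k)
  case 0
  then show ?case by (cases k) auto
next
  case (Suc n)
  have e: "[:a,b:]^Suc n = Polynomial.smult a ([:a,b:]^n) + pCons 0 (Polynomial.smult b ([:a,b:]^n))"
    by (simp add: mult_pCons_left)
  show ?case
  proof (cases k)
    case 0
    then show ?thesis using Suc by (simp add: e)
  next
    case (Suc k')
    have "coeff ([:a,b:]^Suc n) k = a * coeff ([:a,b:]^n) (Suc k') + b * coeff ([:a,b:]^n) k'"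
      by (simp add: e Suc)
    also have "\<dots> = of_nat (Suc n choose k) * a^(Suc n-k) * b^k"
    proof (cases "k' < n")
      case True
      then obtain d where d: "n = Suc (k' + d)" using less_imp_Suc_add by blast
      show ?thesis unfolding Suc.IH using True Suc by (simp add: d algebra_simps)
    next
      case False
      then show ?thesis unfolding Suc.IH using Suc
        by (cases "k' = n") (auto simp: binomial_eq_0)
    qed
    finally show ?thesis .
  qed
qed

definition FF :: "nat \<Rightarrow> nat \<Rightarrow> real poly" where
  "FF N k = [:1,1:]^k * [:-1,1:]^(N-k)"

lemma cc_eq: "(\<Sum>j\<in>{j. j \<le> k \<and> j \<le> n \<and> n - j \<le> N - k}.
        real (k choose j) * real ((N - k) choose (n - j)) * (- 1) ^ (N - k - (n - j))) = coeff (FF N k) n"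
proof -
  have "coeff (FF N k) n = (\<Sum>j\<le>n. coeff ([:1,1:]^k) j * coeff ([:-1,1:]^(N-k)) (n-j))"
    by (simp add: FF_def coeff_mult)
  also have "\<dots> = (\<Sum>j\<le>n. real (k choose j) * real ((N-k) choose (n-j)) * (-1)^(N-k-(n-j)))"
    by (simp add: coeff_lin_pow mult.assoc)
  also have "\<dots> = (\<Sum>j\<in>{j. j \<le> k \<and> j \<le> n \<and> n - j \<le> N - k}.
        real (k choose j) * real ((N - k) choose (n - j)) * (- 1) ^ (N - k - (n - j)))"
    by (rule sum.mono_neutral_right) (auto simp: binomial_eq_0)
  finally show ?thesis by simp
qed

lemma gen: "(\<Sum>k\<le>N. Polynomial.smult (real (N choose k) * poly (FF N k) y) (FF N k)) = [:2, 2*y:]^N"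
proof -
  have "Polynomial.smult (real (N choose k) * poly (FF N k) y) (FF N k) =
     of_nat (N choose k) * [:1+y,1+y:]^k * [:1-y,y-1:]^(N-k)" for k
  proof -
    have a: "[:1+y,1+y:]^k = Polynomial.smult ((1+y)^k) ([:1,1:]^k)"
      by (metis smult_power smult_pCons smult_0_right mult_1_right)
    have b: "[:1-y,y-1:]^(N-k) = Polynomial.smult ((y-1)^(N-k)) ([:-1,1:]^(N-k))"
      by (simp add: smult_power[symmetric] algebra_simps)
    show ?thesis unfolding a b FF_def
      by (simp add: poly_power of_nat_poly algebra_simps)
  qed
  then have "(\<Sum>k\<le>N. Polynomial.smult (real (N choose k) * poly (FF N k) y) (FF N k)) =
     (\<Sum>k\<le>N. of_nat (N choose k) * [:1+y,1+y:]^k * [:1-y,y-1:]^(N-k))" by simp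
  also have "\<dots> = ([:1+y,1+y:] + [:1-y,y-1:])^N" by (rule binomial_ring[symmetric])
  also have "[:1+y,1+y:] + [:1-y,y-1:] = [:2, 2*y:]" by simp
  finally show ?thesis .
qed

lemma orthK: "(\<Sum>k\<le>N. real (N choose k) * coeff (FF N k) n * coeff (FF N k) m) =
   (if m = n then real (N choose n) * 2^N else 0)"
proof -
  define G where "G = (\<Sum>k\<le>N. Polynomial.smult (real (N choose k) * coeff (FF N k) n) (FF N k))"
  have "poly G y = poly (monom (real (N choose n) * 2^N) n) y" for y
  proof -
    have "poly G y = (\<Sum>k\<le>N. real (N choose k) * poly (FF N k) y * coeff (FF N k) n)"
      by (simp add: G_def poly_sum algebra_simps)
    also have "\<dots> = coeff ([:2, 2*y:]^N) n"
      unfolding gen[where N=N and y=y, symmetric] coeff_sum by simp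
    also have "\<dots> = poly (monom (real (N choose n) * 2^N) n) y"
    proof (cases "n \<le> N")
      case True
      then have "(2::real)^(N-n) * (2*y)^n = 2^N * y^n"
        by (simp add: power_mult_distrib power_add[symmetric])
      then show ?thesis by (simp add: coeff_lin_pow poly_monom)
    next
      case False
      then show ?thesis by (simp add: coeff_lin_pow poly_monom binomial_eq_0)
    qed
    finally show ?thesis .
  qed
  then have "G = monom (real (N choose n) * 2^N) n"
    using poly_eq_poly_eq_iff by blast
  then have "coeff G m = coeff (monom (real (N choose n) * 2^N) n) m" by simp
  then show ?thesis by (simp add: G_def coeff_sum coeff_monom algebra_simps)
qed

lemma da_amp_FF: "da_amp N n k = sqrt (fact n * fact (N-n)) / sqrt (fact k * fact (N-k)) / sqrt (2^N) * coeff (FF N k) n"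
  unfolding da_amp_def cc_eq by (simp add: real_sqrt_divide)

lemma orth:
  assumes "n \<le> N" "m \<le> N"
  shows "(\<Sum>k\<le>N. da_amp N n k * da_amp N m k) = (if n = m then 1 else 0)"
proof -
  define K where "K = sqrt (fact n * fact (N-n)) * sqrt (fact m * fact (N-m)) / (2^N * fact N)"
  have t: "da_amp N n k * da_amp N m k = K * (real (N choose k) * coeff (FF N k) n * coeff (FF N k) m)"
    if "k \<le> N" for k
  proof -
    have D: "(fact k * fact (N-k) :: real) > 0" by simp
    have s1: "sqrt (fact k * fact (N-k)) * sqrt (fact k * fact (N-k)) = (fact k * fact (N-k) :: real)"
      using D by simp
    have s2: "sqrt (2^N) * sqrt (2^N) = (2^N::real)" by simp
    have "da_amp N n k * da_amp N m k = sqrt (fact n * fact (N-n)) * sqrt (fact m * fact (N-m)) /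
        (sqrt (fact k * fact (N-k)) * sqrt (fact k * fact (N-k))) / (sqrt (2^N) * sqrt (2^N))
        * (coeff (FF N k) n * coeff (FF N k) m)"
      unfolding da_amp_FF by (simp add: field_simps)
    also have "\<dots> = K * (real (N choose k) * coeff (FF N k) n * coeff (FF N k) m)"
      unfolding s1 s2 K_def binomial_fact[OF that] using D by (simp add: field_simps)
    finally show ?thesis .
  qed
  have "(\<Sum>k\<le>N. da_amp N n k * da_amp N m k) =
      K * (\<Sum>k\<le>N. real (N choose k) * coeff (FF N k) n * coeff (FF N k) m)"
    by (simp add: t sum_distrib_left)
  also have "\<dots> = K * (if m = n then real (N choose n) * 2^N else 0)" by (simp add: orthK)
  also have "\<dots> = (if n = m then 1 else 0)"
  proof (cases "n = m")
    case True
    have "sqrt (fact n * fact (N-n)) * sqrt (fact n * fact (N-n)) = (fact n * fact (N-n) :: real)"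
      by simp
    then show ?thesis using True unfolding K_def binomial_fact[OF assms(1)] by (simp add: field_simps)
  qed auto
  finally show ?thesis .
qed

lemma dims: "dim_row (P_HV N) = N+1" "dim_col (P_HV N) = N+1"
  "dim_row (P_DA N) = N+1" "dim_col (P_DA N) = N+1"
  "dim_row (P_DC N pz) = N+1" "dim_col (P_DC N pz) = N+1"
  by (auto simp: P_DC_def P_HV_def P_DA_def)

lemma M_entry:
  assumes "1 \<le> N" "i \<le> N" "j \<le> N"
  shows "P_DC N pz $$ (i,j) = (if i = j then 1 else 0)
     - pz * ((if i = 0 \<and> j = 0 then 1 else 0) + (if i = N \<and> j = N then 1 else 0))
     - (1 - pz) * (da_amp N i 0 * da_amp N j 0 + da_amp N i N * da_amp N j N)"
proof -
  have hv: "P_HV N $$ (i,j) = (if i = j then 1 else 0)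
     - ((if i = 0 \<and> j = 0 then 1 else 0) + (if i = N \<and> j = N then 1 else 0))"
    using assms by (auto simp: P_HV_def)
  define f where "f k = da_amp N i k * da_amp N j k" for k
  define S where "S = {k. k \<le> N \<and> 1 \<le> k \<and> 1 \<le> N - k}"
  have SS: "{..N} = insert 0 (insert N S)" using assms(1) by (auto simp: S_def)
  have fS: "finite S" by (simp add: S_def)
  have "sum f {..N} = f 0 + (f N + sum f S)"
    unfolding SS using assms(1) fS by (simp add: S_def)
  then have da: "P_DA N $$ (i,j) = (if i = j then 1 else 0) - (f 0 + f N)"
    using assms orth[of i N j] by (simp add: P_DA_def f_def S_def)
  have dc: "P_DC N pz $$ (i,j) = pz * P_HV N $$ (i,j) + (1-pz) * P_DA N $$ (i,j)"
    using assms by (simp add: P_DC_def dims)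
  show ?thesis
    unfolding dc hv da f_def by (simp add: algebra_simps)
qed

lemma M_mult:
  assumes "1 \<le> N" "i \<le> N" "v \<in> carrier_vec (N+1)"
  shows "(P_DC N pz *\<^sub>v v) $ i = v $ i
     - pz * ((if i = 0 then v $ 0 else 0) + (if i = N then v $ N else 0))
     - (1 - pz) * (da_amp N i 0 * (\<Sum>j\<le>N. da_amp N j 0 * v $ j)
                 + da_amp N i N * (\<Sum>j\<le>N. da_amp N j N * v $ j))"
proof -
  have dims: "dim_row (P_DC N pz) = N+1" "dim_col (P_DC N pz) = N+1" "dim_vec v = N+1"
    using assms(3) by (auto simp: P_DC_def P_HV_def P_DA_def)
  have "(P_DC N pz *\<^sub>v v) $ i = (\<Sum>j\<le>N. P_DC N pz $$ (i,j) * v $ j)"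
    using assms(2,3) by (simp add: dims scalar_prod_def atLeast0LessThan lessThan_Suc_atMost)
  also have "\<dots> = (\<Sum>j\<le>N. (if i = j then v $ j else 0)
     - pz * ((if i = 0 \<and> j = 0 then v $ j else 0) + (if i = N \<and> j = N then v $ j else 0))
     - (1 - pz) * (da_amp N i 0 * (da_amp N j 0 * v $ j) + da_amp N i N * (da_amp N j N * v $ j)))"
    by (rule sum.cong) (use assms in \<open>auto simp: M_entry algebra_simps\<close>)
  also have "\<dots> = (\<Sum>j\<le>N. (if i = j then v $ j else 0))
     - pz * ((\<Sum>j\<le>N. (if i = 0 \<and> j = 0 then v $ j else 0)) + (\<Sum>j\<le>N. (if i = N \<and> j = N then v $ j else 0)))
     - (1 - pz) * (da_amp N i 0 * (\<Sum>j\<le>N. da_amp N j 0 * v $ j)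
                 + da_amp N i N * (\<Sum>j\<le>N. da_amp N j N * v $ j))"
    by (simp add: sum_subtractf sum.distrib sum_distrib_left distrib_left)
  also have "\<dots> = v $ i
     - pz * ((if i = 0 then v $ 0 else 0) + (if i = N then v $ N else 0))
     - (1 - pz) * (da_amp N i 0 * (\<Sum>j\<le>N. da_amp N j 0 * v $ j)
                 + da_amp N i N * (\<Sum>j\<le>N. da_amp N j N * v $ j))"
    using assms(2) by simp
  finally show ?thesis .
qed

lemma sqrtC:
  assumes "n \<le> N"
  shows "sqrt (fact n * fact (N-n)) / sqrt (fact N) * real (N choose n) = sqrt (real (N choose n))"
proof -
  define a where "a = (fact n * fact (N-n) :: real)"
  define F where "F = (fact N :: real)"
  have a: "a > 0" "sqrt a * sqrt a = a" by (auto simp: a_def)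
  have F: "F > 0" "sqrt F * sqrt F = F" by (auto simp: F_def)
  have C: "real (N choose n) = F / a" unfolding a_def F_def by (rule binomial_fact[OF assms])
  have "sqrt a / sqrt F * (F / a) = sqrt F / sqrt a"
    using a F by (simp add: field_simps)
  then show ?thesis unfolding C by (simp add: a_def F_def real_sqrt_divide)
qed

lemma da0: "n \<le> N \<Longrightarrow> da_amp N n 0 = (-1)^(N-n) * (sqrt (real (N choose n)) / sqrt (2^N))"
  using sqrtC[of n N] by (simp add: da_amp_FF FF_def coeff_lin_pow field_simps)

lemma daN: "n \<le> N \<Longrightarrow> da_amp N n N = sqrt (real (N choose n)) / sqrt (2^N)"
  using sqrtC[of n N] by (simp add: da_amp_FF FF_def coeff_lin_pow field_simps)

lemma sq_b: "(sqrt (real (N choose n)) / sqrt (2^N)) * (sqrt (real (N choose n)) / sqrt (2^N)) = real (N choose n) / 2^N"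
  by simp

lemma S1: "(\<Sum>i\<le>N. da_amp N i 0 * da_amp N i 0) = 1"
proof -
  have "(\<Sum>i\<le>N. da_amp N i 0 * da_amp N i 0) = (\<Sum>i\<le>N. real (N choose i) / 2^N)"
  proof (rule sum.cong)
    fix i assume "i \<in> {..N}"
    then have i: "i \<le> N" by simp
    have "da_amp N i 0 * da_amp N i 0 = ((-1)^(N-i) * (-1)^(N-i)) *
       ((sqrt (real (N choose i)) / sqrt (2^N)) * (sqrt (real (N choose i)) / sqrt (2^N)))"
      unfolding da0[OF i] by (simp only: mult_ac)
    then show "da_amp N i 0 * da_amp N i 0 = real (N choose i) / 2^N"
      by (simp only: minus_one_mult_self sq_b mult_1_left)
  qed simp
  also have "\<dots> = real (\<Sum>i\<le>N. N choose i) / 2^N" by (simp add: sum_divide_distrib)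
  also have "\<dots> = 1" by (simp add: choose_row_sum)
  finally show ?thesis .
qed

lemma S2: "(\<Sum>i\<le>N. da_amp N i N * da_amp N i N) = 1"
proof -
  have "(\<Sum>i\<le>N. da_amp N i N * da_amp N i N) = (\<Sum>i\<le>N. real (N choose i) / 2^N)"
    by (rule sum.cong) (auto simp: daN)
  also have "\<dots> = real (\<Sum>i\<le>N. N choose i) / 2^N" by (simp add: sum_divide_distrib)
  also have "\<dots> = 1" by (simp add: choose_row_sum)
  finally show ?thesis .
qed

lemma S3: assumes "1 \<le> N" shows "(\<Sum>i\<le>N. da_amp N i 0 * da_amp N i N) = 0"
proof -
  have m: "(-1::real)^(N-i) = (-1)^N * (-1)^i" if "i \<le> N" for i
  proof -
    have e: "(-1::real)^N = (-1)^(N-i) * (-1)^i" by (metis le_add_diff_inverse2 power_add that)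
    show ?thesis unfolding e by (simp only: mult.assoc minus_one_mult_self mult_1_right)
  qed
  have "(\<Sum>i\<le>N. da_amp N i 0 * da_amp N i N) = (\<Sum>i\<le>N. (-1)^N * ((-1)^i * real (N choose i)) / 2^N)"
    by (rule sum.cong) (auto simp: da0 daN m)
  also have "\<dots> = (-1)^N * (\<Sum>i\<le>N. (-1)^i * real (N choose i)) / 2^N"
    by (simp add: sum_divide_distrib sum_distrib_left)
  also have "\<dots> = 0" using assms by (simp add: choose_alternating_sum)
  finally show ?thesis .
qed

lemma quad:
  fixes P R H X Y :: real
  assumes "0 \<le> P" "0 \<le> R" "H^2 \<le> P * R"
  shows "0 \<le> P * X^2 + R * Y^2 - 2 * H * X * Y"
proof (cases "P = 0")
  case True
  then have "H^2 = 0" using assms by (simp add: antisym)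
  then have "H = 0" by simp
  then show ?thesis using True assms by simp
next
  case False
  then have P: "P > 0" using assms by simp
  have "P * (P * X^2 + R * Y^2 - 2 * H * X * Y) = (P*X - H*Y)^2 + (P*R - H^2) * Y^2"
    by (simp add: power2_eq_square algebra_simps)
  also have "\<dots> \<ge> 0" using assms by simp
  finally show ?thesis using P by (simp add: zero_le_mult_iff)
qed

lemma sum3: "2 * X = A + B + C \<Longrightarrow> 0 \<le> B \<Longrightarrow> 0 \<le> C \<Longrightarrow> 0 \<le> A \<Longrightarrow> (0::real) \<le> X"
  by linarith

lemma sum2: "2 * X = A + B \<Longrightarrow> 0 \<le> A \<Longrightarrow> 0 \<le> B \<Longrightarrow> (0::real) \<le> X"
  by linarith

lemma delta_sum0: "(\<Sum>j\<le>(N::nat). h j * (if j = 0 then 1 else 0)) = (h 0 :: real)"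
  by (simp add: if_distrib cong: if_cong)

lemma delta_sumN: "(\<Sum>j\<le>(N::nat). h j * (if j = N then 1 else 0)) = (h N :: real)"
  by (simp add: if_distrib cong: if_cong)

theorem lemma2:
  fixes N :: nat and pz :: real
  assumes "0 \<le> pz" and "pz \<le> 1" and "1 \<le> N"
  defines "lmin \<equiv> (if odd N
       then 1/2 - 1/2 * sqrt ((2*pz - 1)^2 + 8 * (1/2)^N * (pz - pz^2))
       else 1/2 - 1/2 * sqrt ((2*pz - 1)^2 + 16 * (1/2)^N * (pz - pz^2)))"
  shows "eigenvalue (P_DC N pz) lmin \<and> (\<forall>\<mu>. eigenvalue (P_DC N pz) \<mu> \<longrightarrow> lmin \<le> \<mu>)"
proof -
  define c :: real where "c = 1 / sqrt (2^N)"
  define al where "al i = da_amp N i 0" for i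
  define be where "be i = da_amp N i N" for i
  define eps :: real where "eps = (if even N then 1 else 0)"
  define g where "g = c * (1 + eps)"
  define Q where "Q = (2*pz - 1)^2 + (if odd N then 8 else 16) * (1/2::real)^N * (pz - pz^2)"
  define R where "R = sqrt Q"
  define L where "L = 1 - lmin"
  have lmin_eq: "lmin = 1/2 - 1/2 * R" unfolding lmin_def R_def Q_def by auto
  have L_eq: "L = 1/2 + R/2" unfolding L_def lmin_eq by simp
  have c_pos: "c > 0" unfolding c_def by simp
  have cc: "(1/2::real)^N = c * c" unfolding c_def by (simp add: power_one_over)
  have N0: "N \<noteq> 0" using assms(3) by simp
  have al0: "al 0 = (-1)^N * c" using da0[of 0 N] by (simp add: al_def c_def)
  have alN: "al N = c" using da0[of N N] by (simp add: al_def c_def)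
  have be0: "be 0 = c" using daN[of 0 N] by (simp add: be_def c_def)
  have beN: "be N = c" using daN[of N N] by (simp add: be_def c_def)
  have SAA: "(\<Sum>i\<le>N. al i * al i) = 1" using S1 by (simp add: al_def)
  have SBB: "(\<Sum>i\<le>N. be i * be i) = 1" using S2 by (simp add: be_def)
  have SAB: "(\<Sum>i\<le>N. al i * be i) = 0" using S3[OF assms(3)] by (simp add: al_def be_def)
  have SBA: "(\<Sum>i\<le>N. be i * al i) = 0" using SAB by (simp add: mult.commute)
  have pq: "pz - pz^2 \<ge> 0" using assms(1,2) by (simp add: power2_eq_square mult_left_le)
  have Q_ge: "Q \<ge> (2*pz - 1)^2" unfolding Q_def using pq by simp
  then have Q0: "Q \<ge> 0" by (meson order_trans zero_le_power2)
  have RR: "R * R = Q" unfolding R_def using Q0 by simp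
  have R_ge: "R \<ge> \<bar>2*pz - 1\<bar>" unfolding R_def using Q_ge real_sqrt_le_mono by fastforce
  have hA: "L - pz \<ge> 0" using R_ge L_eq by (auto simp: abs_if split: if_splits)
  have hB: "L - (1 - pz) \<ge> 0" using R_ge L_eq by (auto simp: abs_if split: if_splits)
  have hL: "L > 0" using hA hB by linarith
  have key: "(L - pz) * (L - (1 - pz)) = 2 * pz * (1 - pz) * c * g"
  proof -
    have "(L - pz) * (L - (1 - pz)) = (R * R - (2*pz - 1)^2) / 4"
      unfolding L_eq by (simp add: field_simps power2_eq_square)
    also have "\<dots> = (if odd N then 8 else 16) * (c * c) * (pz - pz^2) / 4"
      unfolding RR Q_def cc by simp
    also have "\<dots> = 2 * pz * (1 - pz) * c * g"
      unfolding g_def eps_def by (cases "even N") (simp_all add: power2_eq_square field_simps)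
    finally show ?thesis .
  qed
  have Mv: "(P_DC N pz *\<^sub>v v) $ i = v$i - pz*((if i = 0 then v$0 else 0) + (if i = N then v$N else 0))
     - (1 - pz)*(al i * (\<Sum>j\<le>N. al j * v$j) + be i * (\<Sum>j\<le>N. be j * v$j))"
    if "v \<in> carrier_vec (N+1)" "i \<le> N" for v i
    using M_mult[OF assms(3) that(2) that(1)] by (simp add: al_def be_def)
  have dimM: "dim_row (P_DC N pz) = N+1" by (simp add: dims)

  define x where "x = 2 * pz * c"
  define y where "y = L - pz"
  define f where "f i = x * (eps * (if i = 0 then 1 else 0) + (if i = N then 1 else 0)) + y * (al i + be i)" for i
  define v where "v = vec (N+1) f"
  have lin: "(\<Sum>j\<le>N. h j * f j) = x * (eps * h 0 + h N) + y * ((\<Sum>j\<le>N. h j * al j) + (\<Sum>j\<le>N. h j * be j))" for h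
  proof -
    have "(\<Sum>j\<le>N. h j * f j) = x * eps * (\<Sum>j\<le>N. h j * (if j = 0 then 1 else 0))
       + x * (\<Sum>j\<le>N. h j * (if j = N then 1 else 0))
       + y * ((\<Sum>j\<le>N. h j * al j) + (\<Sum>j\<le>N. h j * be j))"
      by (simp add: f_def sum.distrib sum_distrib_left algebra_simps)
    then show ?thesis by (simp only: delta_sum0 delta_sumN) (simp add: algebra_simps)
  qed
  have a_val: "(\<Sum>j\<le>N. al j * f j) = g * x + y"
    using lin[of al] SAA SAB al0 alN by (simp add: g_def eps_def algebra_simps)
  have b_val: "(\<Sum>j\<le>N. be j * f j) = g * x + y"
    using lin[of be] SBB SBA be0 beN by (simp add: g_def eps_def algebra_simps)
  have f0: "f 0 = eps * (x + 2 * c * y)"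
    using N0 al0 be0 by (simp add: f_def eps_def algebra_simps)
  have fN: "f N = x + 2 * c * y"
    using N0 alN beN by (simp add: f_def algebra_simps)
  have e1: "L * x = pz * (x + 2 * c * y)" by (simp add: x_def y_def algebra_simps)
  have e2: "L * y = (1 - pz) * (g * x + y)"
  proof -
    have "L * y - (1 - pz) * (g * x + y) = (L - pz) * (L - (1 - pz)) - 2 * pz * (1 - pz) * c * g"
      by (simp add: x_def y_def algebra_simps)
    then show ?thesis using key by simp
  qed
  have vcar: "v \<in> carrier_vec (N+1)" by (simp add: v_def)
  have vj: "(\<Sum>j\<le>N. h j * v$j) = (\<Sum>j\<le>N. h j * f j)" for h
    by (rule sum.cong) (auto simp: v_def)
  have Mv_eq: "P_DC N pz *\<^sub>v v = lmin \<cdot>\<^sub>v v"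
  proof (rule eq_vecI)
    show "dim_vec (P_DC N pz *\<^sub>v v) = dim_vec (lmin \<cdot>\<^sub>v v)" by (simp add: dimM v_def)
  next
    fix i assume "i < dim_vec (lmin \<cdot>\<^sub>v v)"
    then have i: "i \<le> N" by (simp add: v_def)
    have vi: "v $ i = f i" "v $ 0 = f 0" "v $ N = f N" using i by (auto simp: v_def)
    have t1: "(if i = 0 then f 0 else 0) + (if i = N then f N else 0)
       = (x + 2*c*y) * (eps * (if i = 0 then 1 else 0) + (if i = N then 1 else 0))"
      using f0 fN N0 by auto
    have t2: "L * f i = (L * x) * (eps * (if i = 0 then 1 else 0) + (if i = N then 1 else 0)) + (L * y) * (al i + be i)"
      by (simp add: f_def algebra_simps)
    have t3: "lmin * f i = f i - L * f i" by (simp add: L_def algebra_simps)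
    have "(P_DC N pz *\<^sub>v v) $ i = f i - pz * ((x + 2*c*y) * (eps * (if i = 0 then 1 else 0) + (if i = N then 1 else 0)))
        - (1 - pz) * (al i * (g * x + y) + be i * (g * x + y))"
      using Mv[OF vcar i] unfolding vi vj a_val b_val t1 by simp
    also have "\<dots> = lmin * f i"
      unfolding t3 t2 e1 e2 by (simp add: algebra_simps)
    finally show "(P_DC N pz *\<^sub>v v) $ i = (lmin \<cdot>\<^sub>v v) $ i" using i by (simp add: v_def)
  qed
  have vnz: "v \<noteq> 0\<^sub>v (N+1)"
  proof
    assume v0: "v = 0\<^sub>v (N+1)"
    have fz: "f j = 0" if "j \<le> N" for j
    proof -
      have "v $ j = 0" using v0 that by simp
      then show ?thesis using that by (simp add: v_def)
    qed
    have "(\<Sum>j\<le>N. al j * f j) = 0" using fz by simp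
    then have "g * x + y = 0" using a_val by simp
    moreover have "x + 2 * c * y = 0" using fz[of N] fN by simp
    ultimately have "L * x = 0" "L * y = 0" using e1 e2 by auto
    then have "x = 0" "y = 0" using hL by auto
    then have "pz = 0" using c_pos by (simp add: x_def)
    then show False using \<open>y = 0\<close> hL by (simp add: y_def)
  qed
  have part1: "eigenvalue (P_DC N pz) lmin"
    unfolding eigenvalue_def eigenvector_def using vcar vnz Mv_eq dimM by auto

  have part2: "lmin \<le> mu" if ev: "eigenvalue (P_DC N pz) mu" for mu
  proof -
    obtain u where ucar: "u \<in> carrier_vec (N+1)" and unz: "u \<noteq> 0\<^sub>v (N+1)"
      and Mu: "P_DC N pz *\<^sub>v u = mu \<cdot>\<^sub>v u"
      using ev unfolding eigenvalue_def eigenvector_def dimM by auto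
    define w where "w i = u $ i" for i
    define a where "a = (\<Sum>j\<le>N. al j * w j)"
    define b where "b = (\<Sum>j\<le>N. be j * w j)"
    define z where "z i = pz * (w 0 * (if i = 0 then 1 else 0) + w N * (if i = N then 1 else 0))
        + (1 - pz) * (al i * a + be i * b)" for i
    have zw: "z i = (1 - mu) * w i" if "i \<le> N" for i
    proof -
      have "(P_DC N pz *\<^sub>v u) $ i = mu * w i" using Mu ucar that by (simp add: w_def)
      moreover have "(P_DC N pz *\<^sub>v u) $ i = w i - z i"
        using Mv[OF ucar that] by (simp add: w_def a_def b_def z_def)
      ultimately show ?thesis by (simp add: algebra_simps)
    qed
    have linz: "(\<Sum>j\<le>N. h j * z j) = pz * (h 0 * w 0 + h N * w N)
        + (1 - pz) * ((\<Sum>j\<le>N. h j * al j) * a + (\<Sum>j\<le>N. h j * be j) * b)" for h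
    proof -
      have "(\<Sum>j\<le>N. h j * z j) = (\<Sum>j\<le>N. (pz * w 0) * (h j * (if j = 0 then 1 else 0))
         + (pz * w N) * (h j * (if j = N then 1 else 0))
         + ((1 - pz) * a) * (h j * al j) + ((1 - pz) * b) * (h j * be j))"
        by (rule sum.cong) (simp_all add: z_def algebra_simps)
      also have "\<dots> = (pz * w 0) * (\<Sum>j\<le>N. h j * (if j = 0 then 1 else 0))
         + (pz * w N) * (\<Sum>j\<le>N. h j * (if j = N then 1 else 0))
         + ((1 - pz) * a) * (\<Sum>j\<le>N. h j * al j) + ((1 - pz) * b) * (\<Sum>j\<le>N. h j * be j)"
        by (simp only: sum.distrib sum_distrib_left)
      finally show ?thesis by (simp only: delta_sum0 delta_sumN) (simp add: algebra_simps)
    qed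
    define W where "W = (\<Sum>i\<le>N. w i * w i)"
    define F where "F = (\<Sum>i\<le>N. w i * z i)"
    define Z where "Z = (\<Sum>i\<le>N. z i * z i)"
    have wa: "(\<Sum>j\<le>N. w j * al j) = a" "(\<Sum>j\<le>N. w j * be j) = b"
      by (simp_all add: a_def b_def mult.commute)
    have F_eq: "F = pz * (w 0 * w 0 + w N * w N) + (1 - pz) * (a * a + b * b)"
      unfolding F_def linz wa by simp
    have z0: "z 0 = pz * w 0 + (1 - pz) * (al 0 * a + be 0 * b)" using N0 by (simp add: z_def)
    have zN: "z N = pz * w N + (1 - pz) * (al N * a + be N * b)" using N0 by (simp add: z_def)
    have za: "(\<Sum>j\<le>N. z j * al j) = pz * (al 0 * w 0 + al N * w N) + (1 - pz) * a"
      using linz[of al] SAA SAB by (simp add: mult.commute)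
    have zb: "(\<Sum>j\<le>N. z j * be j) = pz * (be 0 * w 0 + be N * w N) + (1 - pz) * b"
      using linz[of be] SBB SBA by (simp add: mult.commute)
    have Z_eq: "Z = pz * (z 0 * w 0 + z N * w N) + (1 - pz) * ((\<Sum>j\<le>N. z j * al j) * a + (\<Sum>j\<le>N. z j * be j) * b)"
      unfolding Z_def linz by simp
    have sq: "0 \<le> (\<Sum>i\<le>N. (L * w i - z i) * (L * w i - z i))" by (simp add: sum_nonneg)
    also have "\<dots> = L * L * W - 2 * L * F + Z"
      by (simp add: W_def F_def Z_def algebra_simps sum.distrib sum_subtractf sum_distrib_left)
    finally have i1: "0 \<le> L * L * W - 2 * L * F + Z" .
    have pA: "0 \<le> pz * (L - pz)" using assms(1) hA by simp
    have qB: "0 \<le> (1 - pz) * (L - (1 - pz))" using assms(2) hB by simp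
    have i2: "0 \<le> L * F - Z"
    proof (cases "even N")
      case True
      have key': "(L - pz) * (L - (1 - pz)) = 4 * pz * (1 - pz) * c * c"
        using key True by (simp add: g_def eps_def)
      have q1: "0 \<le> (pz * (L - pz)) * (w 0 + w N)^2 + ((1 - pz) * (L - (1 - pz))) * (a + b)^2
          - 2 * (2 * pz * (1 - pz) * c) * (w 0 + w N) * (a + b)"
      proof (rule quad[OF pA qB])
        have "(pz * (L - pz)) * ((1 - pz) * (L - (1 - pz))) = pz * (1 - pz) * ((L - pz) * (L - (1 - pz)))"
          by (simp add: algebra_simps)
        also have "\<dots> = pz * (1 - pz) * (4 * pz * (1 - pz) * c * c)" by (simp only: key')
        also have "\<dots> = (2 * pz * (1 - pz) * c)^2" by (simp add: power2_eq_square algebra_simps)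
        finally show "(2 * pz * (1 - pz) * c)^2 \<le> (pz * (L - pz)) * ((1 - pz) * (L - (1 - pz)))" by simp
      qed
      have "2 * (L * F - Z) = ((pz * (L - pz)) * (w 0 + w N)^2 + ((1 - pz) * (L - (1 - pz))) * (a + b)^2
          - 2 * (2 * pz * (1 - pz) * c) * (w 0 + w N) * (a + b))
          + (pz * (L - pz)) * (w 0 - w N)^2 + ((1 - pz) * (L - (1 - pz))) * (a - b)^2"
        unfolding F_eq Z_eq z0 zN za zb using True al0 alN be0 beN
        by (simp add: power2_eq_square algebra_simps)
      moreover have "0 \<le> (pz * (L - pz)) * (w 0 - w N)^2" using pA by simp
      moreover have "0 \<le> ((1 - pz) * (L - (1 - pz))) * (a - b)^2" using qB by simp
      ultimately show ?thesis using q1 by (rule sum3)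
    next
      case False
      have key': "(L - pz) * (L - (1 - pz)) = 2 * pz * (1 - pz) * c * c"
        using key False by (simp add: g_def eps_def)
      have pA2: "0 \<le> 2 * (pz * (L - pz))" using pA by simp
      have H: "(2 * pz * (1 - pz) * c)^2 \<le> 2 * (pz * (L - pz)) * ((1 - pz) * (L - (1 - pz)))"
      proof -
        have "2 * (pz * (L - pz)) * ((1 - pz) * (L - (1 - pz))) = 2 * pz * (1 - pz) * ((L - pz) * (L - (1 - pz)))"
          by (simp add: algebra_simps)
        also have "\<dots> = 2 * pz * (1 - pz) * (2 * pz * (1 - pz) * c * c)" by (simp only: key')
        also have "\<dots> = (2 * pz * (1 - pz) * c)^2" by (simp add: power2_eq_square algebra_simps)
        finally show ?thesis by simp
      qed
      have q1: "0 \<le> 2 * (pz * (L - pz)) * (w 0)^2 + ((1 - pz) * (L - (1 - pz))) * (b - a)^2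
          - 2 * (2 * pz * (1 - pz) * c) * w 0 * (b - a)"
        by (rule quad[OF pA2 qB H])
      have q2: "0 \<le> 2 * (pz * (L - pz)) * (w N)^2 + ((1 - pz) * (L - (1 - pz))) * (a + b)^2
          - 2 * (2 * pz * (1 - pz) * c) * w N * (a + b)"
        by (rule quad[OF pA2 qB H])
      have "2 * (L * F - Z) = (2 * (pz * (L - pz)) * (w 0)^2 + ((1 - pz) * (L - (1 - pz))) * (b - a)^2
          - 2 * (2 * pz * (1 - pz) * c) * w 0 * (b - a))
          + (2 * (pz * (L - pz)) * (w N)^2 + ((1 - pz) * (L - (1 - pz))) * (a + b)^2
          - 2 * (2 * pz * (1 - pz) * c) * w N * (a + b))"
        unfolding F_eq Z_eq z0 zN za zb using False al0 alN be0 beN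
        by (simp add: power2_eq_square algebra_simps)
      then show ?thesis using q1 q2 by (rule sum2)
    qed
    have "L * (L * W) \<ge> L * F" using i1 i2 by (simp add: algebra_simps)
    then have LW: "L * W \<ge> F" using hL by simp
    have FW: "F = (1 - mu) * W"
      unfolding F_def W_def by (simp add: zw sum_distrib_left algebra_simps)
    have "W > 0"
    proof -
      obtain i where i: "i < N+1" "u $ i \<noteq> 0"
        using unz ucar by (metis carrier_vecD eq_vecI index_zero_vec(1,2))
      have "0 < w i * w i" using i(2) unfolding w_def by (metis not_real_square_gt_zero)
      also have "\<dots> \<le> W" unfolding W_def
        by (rule member_le_sum) (use i in auto)
      finally show ?thesis .
    qed
    then have "1 - mu \<le> L" using LW FW by (simp add: mult_le_cancel_right)
    then show ?thesis by (simp add: L_def)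
  qed
  show ?thesis using part1 part2 by blast
qed

end
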